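(* Let $\mathfrak g=\mathfrak k\oplus\mathfrak m$ be a Pauli-spanned Cartan decomposition and let $b_1,\dots,b_d\in\tilde{\mathfrak m}$ be pairwise commuting Pauli strings (spanning an Abelian subalgebra $\mathfrak b\subseteq\mathfrak m$) all lying in the same connected component of the frustration graph of $\mathfrak g$. If for some $2\le r\le d$ both $\tilde{\mathfrak k}^{r-1}_{1\dots r-2}$ and $\tilde{\mathfrak k}^r_{1\dots r-1}$ are non-empty, then $|\tilde{\mathfrak k}^{r-1}_{1\dots r-2}|>|\tilde{\mathfrak k}^r_{1\dots r-1}|$.
   Context: Pauli strings on $n$ qubits are tensor products of $I,X,Y,Z$, not all identity; two Pauli strings either commute or anticommute. A Pauli-spanned Cartan decomposition is $\mathfrak g=\mathfrak k\oplus\mathfrak m\subseteq\mathfrak{su}(2^n)$ with $\mathfrak k=\mathrm{span}_{i\mathbb R}\tilde{\mathfrak k}$, $\mathfrak m=\mathrm{span}_{i\mathbb R}\tilde{\mathfrak m}$, $\mathfrak g=\mathrm{span}_{i\mathbb R}\tilde{\mathfrak g}$ with $\tilde{\mathfrak g}=\tilde{\mathfrak k}\sqcup\tilde{\mathfrak m}$ the set of all Pauli strings (up to phase) $\sigma$ with $i\sigma\in\mathfrak g$, and $[\mathfrak k,\mathfrak k]\subseteq\mathfrak k$, $[\mathfrak m,\mathfrak m]\subseteq\mathfrak k$, $[\mathfrak k,\mathfrak m]\subseteq\mathfrak m$. The frustration graph of $\mathfrak g$ has vertex set $\tilde{\mathfrak g}$, with edges between anticommuting pairs. For disjoint index lists,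 $\tilde{\mathfrak k}^{i_1i_2\dots}_{j_1j_2\dots}$ is the set of $k\in\tilde{\mathfrak k}$ anticommuting with every $b_{i_p}$ and commuting with every $b_{j_q}$ (no condition on other indices). *)

theory Defs
  imports Main
begin

text \<open>Single-qubit Pauli operators (up to phase).\<close>
datatype pauli = PI | PX | PY | PZ

definition pauli_string :: "nat \<Rightarrow> pauli list \<Rightarrow> bool" where
  "pauli_string n p \<longleftrightarrow> length p = n \<and> (\<exists>i<n. p ! i \<noteq> PI)"

definition anticommute :: "pauli list \<Rightarrow> pauli list \<Rightarrow> bool" where
  "anticommute p q \<longleftrightarrow>
     odd (card {i. i < length p \<and> p ! i \<noteq> PI \<and> q ! i \<noteq> PI \<and> p ! i \<noteq> q ! i})"

fun pmul1 :: "pauli \<Rightarrow> pauli \<Rightarrow> pauli" where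
  "pmul1 PI b = b"
| "pmul1 a PI = a"
| "pmul1 PX PX = PI" | "pmul1 PY PY = PI" | "pmul1 PZ PZ = PI"
| "pmul1 PX PY = PZ" | "pmul1 PY PX = PZ"
| "pmul1 PY PZ = PX" | "pmul1 PZ PY = PX"
| "pmul1 PX PZ = PY" | "pmul1 PZ PX = PY"

text \<open>For anticommuting \<sigma>,\<tau> the commutator [i\<sigma>, i\<tau>] is a nonzero multiple of
  i times this Pauli string; for commuting ones it is 0.\<close>
definition pmul :: "pauli list \<Rightarrow> pauli list \<Rightarrow> pauli list" where
  "pmul p q = map2 pmul1 p q"

text \<open>Pauli-spanned Cartan decomposition on n qubits, given by the disjoint sets
  K (= k tilde) and M (= m tilde) of Pauli strings; the commutation relations
  [k,k] \<subseteq> k, [m,m] \<subseteq> k, [k,m] \<subseteq> m are written out on the spanning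
  Pauli strings.\<close>
definition pauli_cartan :: "nat \<Rightarrow> pauli list set \<Rightarrow> pauli list set \<Rightarrow> bool" where
  "pauli_cartan n K M \<longleftrightarrow>
     (\<forall>p\<in>K \<union> M. pauli_string n p) \<and> K \<inter> M = {} \<and>
     (\<forall>a\<in>K. \<forall>b\<in>K. anticommute a b \<longrightarrow> pmul a b \<in> K) \<and>
     (\<forall>a\<in>M. \<forall>b\<in>M. anticommute a b \<longrightarrow> pmul a b \<in> K) \<and>
     (\<forall>a\<in>K. \<forall>b\<in>M. anticommute a b \<longrightarrow> pmul a b \<in> M)"

definition frust_edge :: "pauli list set \<Rightarrow> pauli list \<Rightarrow> pauli list \<Rightarrow> bool" where
  "frust_edge G p q \<longleftrightarrow> p \<in> G \<and> q \<in> G \<and> anticommute p q"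

definition same_component :: "pauli list set \<Rightarrow> pauli list \<Rightarrow> pauli list \<Rightarrow> bool" where
  "same_component G p q \<longleftrightarrow> p \<in> G \<and> q \<in> G \<and> (frust_edge G)\<^sup>*\<^sup>* p q"

text \<open>k tilde with upper indices A and lower indices C (w.r.t. b).\<close>
definition kset :: "pauli list set \<Rightarrow> (nat \<Rightarrow> pauli list) \<Rightarrow> nat set \<Rightarrow> nat set \<Rightarrow> pauli list set" where
  "kset K b A C = {k \<in> K. (\<forall>i\<in>A. anticommute k (b i)) \<and> (\<forall>j\<in>C. \<not> anticommute k (b j))}"

end

theory Submission
  imports Defs
begin

definition ac1 :: "pauli \<Rightarrow> pauli \<Rightarrow> bool" where
  "ac1 a b \<longleftrightarrow> a \<noteq> PI \<and> b \<noteq> PI \<and> a \<noteq> b"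

lemma ac_def2: "anticommute p q = odd (card {i. i < length p \<and> ac1 (p!i) (q!i)})"
  unfolding anticommute_def ac1_def by simp

lemma ac1_pmul1: "ac1 (pmul1 a b) c = (ac1 a c \<noteq> ac1 b c)"
  by (cases a; cases b; cases c) (auto simp: ac1_def)

lemma ac1_sym: "ac1 a b = ac1 b a" by (auto simp: ac1_def)

lemma odd_card_symdiff:
  assumes "finite A" "finite B"
  shows "odd (card ((A - B) \<union> (B - A))) = (odd (card A) \<noteq> odd (card B))"
proof -
  have d: "card ((A - B) \<union> (B - A)) = card (A - B) + card (B - A)"
    by (rule card_Un_disjoint) (use assms in auto)
  have a: "card A = card (A - B) + card (A \<inter> B)"
    using assms card_Diff_subset_Int[of A B] card_mono[of A "A \<inter> B"] by auto
  have b: "card B = card (B - A) + card (A \<inter> B)"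
    using assms card_Diff_subset_Int[of B A] card_mono[of B "A \<inter> B"] by (auto simp: Int_commute)
  show ?thesis using d a b by auto
qed

lemma length_pmul[simp]: "length (pmul p q) = min (length p) (length q)"
  by (simp add: pmul_def)

lemma nth_pmul[simp]: "i < length p \<Longrightarrow> i < length q \<Longrightarrow> pmul p q ! i = pmul1 (p!i) (q!i)"
  by (simp add: pmul_def)

lemma ac_pmul:
  assumes "length p = length r" "length q = length r"
  shows "anticommute (pmul p q) r = (anticommute p r \<noteq> anticommute q r)"
proof -
  let ?A = "{i. i < length r \<and> ac1 (p!i) (r!i)}"
  let ?B = "{i. i < length r \<and> ac1 (q!i) (r!i)}"
  have "{i. i < length (pmul p q) \<and> ac1 (pmul p q ! i) (r!i)} = (?A - ?B) \<union> (?B - ?A)"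
    using assms by (auto simp: ac1_pmul1)
  moreover have "finite ?A" "finite ?B" by auto
  ultimately show ?thesis using assms odd_card_symdiff[of ?A ?B] by (simp add: ac_def2)
qed

lemma ac_sym: "length p = length q \<Longrightarrow> anticommute p q = anticommute q p"
  unfolding ac_def2 by (simp add: ac1_sym)

lemma ac_self[simp]: "\<not> anticommute p p"
  unfolding ac_def2 by (simp add: ac1_def)

lemma ac_pmul_r:
  assumes "length p = length r" "length q = length r"
  shows "anticommute r (pmul p q) = (anticommute r p \<noteq> anticommute r q)"
  using ac_pmul[OF assms] assms ac_sym by (metis length_pmul min.idem)

lemma pmul_comm: "pmul p q = pmul q p"
  apply (rule nth_equalityI) apply simp
  apply simp
  apply (case_tac "p!i"; case_tac "q!i"; simp)
  done

lemma pmul_id1: "length x = length u \<Longrightarrow> length v = length u \<Longrightarrow>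
   pmul (pmul (pmul x v) u) (pmul x v) = u"
  apply (rule nth_equalityI) apply simp
  apply simp
  apply (case_tac "x!i"; case_tac "v!i"; case_tac "u!i"; simp)
  done

lemma pmul_id2: "length x = length u \<Longrightarrow> length v = length u \<Longrightarrow>
   pmul (pmul (pmul x v) u) (pmul x u) = v"
  apply (rule nth_equalityI) apply simp
  apply simp
  apply (case_tac "x!i"; case_tac "v!i"; case_tac "u!i"; simp)
  done

lemma pmul_id3: "length c = length p \<Longrightarrow> pmul c (pmul c p) = p"
  apply (rule nth_equalityI) apply simp
  apply simp
  apply (case_tac "c!i"; case_tac "p!i"; simp)
  done


lemma dist2:
  assumes clos: "\<And>p q. p\<in>G \<Longrightarrow> q\<in>G \<Longrightarrow> anticommute p q \<Longrightarrow> pmul p q \<in> G"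
    and len: "\<And>p. p\<in>G \<Longrightarrow> length p = n"
    and path: "(frust_edge G)\<^sup>*\<^sup>* u z" and uG: "u \<in> G"
  shows "z = u \<or> anticommute u z \<or> (\<exists>y\<in>G. anticommute u y \<and> anticommute y z)"
  using path
proof (induction rule: rtranclp_induct)
  case base
  then show ?case by simp
next
  case (step x z)
  from step.hyps(2) have xG: "x \<in> G" and zG: "z \<in> G" and xz: "anticommute x z"
    by (auto simp: frust_edge_def)
  show ?case
  proof (cases "z = u \<or> anticommute u z")
    case True then show ?thesis by blast
  next
    case False
    from step.IH show ?thesis
    proof (elim disjE)
      assume "x = u" then show ?thesis using xz False by simp
    next
      assume "anticommute u x" then show ?thesis using xG xz by blast
    next
      assume "\<exists>y\<in>G. anticommute u y \<and> anticommute y x"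
      then obtain y where yG: "y \<in> G" and uy: "anticommute u y" and yx: "anticommute y x" by blast
      show ?thesis
      proof (cases "anticommute y z")
        case True then show ?thesis using yG uy by blast
      next
        case yz: False
        show ?thesis
        proof (cases "anticommute u x")
          case True then show ?thesis using xG xz by blast
        next
          case ux: False
          have qG: "pmul y x \<in> G" using clos yG xG yx by blast
          have l: "length y = n" "length x = n" "length u = n" "length z = n"
            using len yG xG uG zG by auto
          have "anticommute u (pmul y x)" using ac_pmul_r[of y u x] l uy ux by simp
          moreover have "anticommute (pmul y x) z" using ac_pmul[of y z x] l yz xz by simp
          ultimately show ?thesis using qG by blast
        qed
      qed
    qed
  qed
qed

lemma construct:
  assumes clos: "\<And>p q. p\<in>G \<Longrightarrow> q\<in>G \<Longrightarrow> anticommute p q \<Longrightarrow> pmul p q \<in> G"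
    and len: "\<And>p. p\<in>G \<Longrightarrow> length p = n"
    and G: "y \<in> G" "a \<in> G" "k \<in> G" "u \<in> G" "v \<in> G" "c \<in> G"
    and h: "anticommute y c" "anticommute y u" "anticommute y v" "anticommute a u"
      "\<not> anticommute a v" "\<not> anticommute a k" "\<not> anticommute a c" "anticommute k v"
      "\<not> anticommute k u" "\<not> anticommute k c" "\<not> anticommute u v" "\<not> anticommute u c"
      "\<not> anticommute v c"
  shows "\<exists>x\<in>G. anticommute x u \<and> anticommute x v \<and>
    (\<forall>w. length w = n \<longrightarrow> \<not> anticommute a w \<longrightarrow> \<not> anticommute k w \<longrightarrow> \<not> anticommute u w
       \<longrightarrow> \<not> anticommute v w \<longrightarrow> \<not> anticommute c w \<longrightarrow> \<not> anticommute x w)"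
proof -
  have l: "length y = n" "length a = n" "length k = n" "length u = n" "length v = n" "length c = n"
    using len G by auto
  note S = ac_pmul ac_pmul_r l
  have sy: "anticommute a y = anticommute y a" "anticommute k y = anticommute y k"
    "anticommute c y" "anticommute u y" "anticommute v y" "anticommute u a" "\<not> anticommute v a"
    "\<not> anticommute k a" "\<not> anticommute c a" "anticommute v k" "\<not> anticommute u k" "\<not> anticommute c k"
    "\<not> anticommute v u" "\<not> anticommute c u" "\<not> anticommute c v"
    using h ac_sym l by metis+
  define y1 where "y1 = (if anticommute y a then y else pmul y u)"
  define y2 where "y2 = (if anticommute y k then y else pmul y v)"
  have y1G: "y1 \<in> G" unfolding y1_def using clos G h by auto
  have y2G: "y2 \<in> G" unfolding y2_def using clos G h by auto
  have z1G: "pmul (pmul y1 a) c \<in> G"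
    apply (rule clos) apply (rule clos) using y1G G apply auto
    unfolding y1_def using h sy by (auto simp: S)
  have z2G: "pmul y2 k \<in> G"
    apply (rule clos) using y2G G apply auto
    unfolding y2_def using h sy by (auto simp: S)
  have ac12: "anticommute (pmul (pmul y1 a) c) (pmul y2 k)"
    unfolding y1_def y2_def using h sy by (auto simp: S)
  define x where "x = pmul (pmul (pmul y1 a) c) (pmul y2 k)"
  have xG: "x \<in> G" unfolding x_def using clos z1G z2G ac12 by blast
  show ?thesis
  proof (intro bexI[OF _ xG] conjI allI impI)
    show "anticommute x u" unfolding x_def y1_def y2_def using h sy by (auto simp: S)
    show "anticommute x v" unfolding x_def y1_def y2_def using h sy by (auto simp: S)
    fix w assume w: "length w = n" "\<not> anticommute a w" "\<not> anticommute k w" "\<not> anticommute u w"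
      "\<not> anticommute v w" "\<not> anticommute c w"
    show "\<not> anticommute x w" unfolding x_def y1_def y2_def using h sy w by (auto simp: S)
  qed
qed


definition crot :: "pauli list \<Rightarrow> pauli list \<Rightarrow> pauli list" where
  "crot c p = (if anticommute c p then pmul c p else p)"

lemma crot_len: "length c = length p \<Longrightarrow> length (crot c p) = length p"
  by (simp add: crot_def)

lemma crot_ac:
  assumes "length c = n" "length p = n" "length q = n"
  shows "anticommute (crot c p) (crot c q) = anticommute p q"
proof -
  have s: "anticommute p c = anticommute c p" "anticommute q c = anticommute c q"
    "anticommute q p = anticommute p q"
    using ac_sym assms by metis+
  show ?thesis unfolding crot_def using assms s by (auto simp: ac_pmul ac_pmul_r)
qed

lemma crot_inv:
  assumes "length c = length p"
  shows "crot c (crot c p) = p"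
proof (cases "anticommute c p")
  case True
  have "anticommute c (pmul c p)" using True assms by (simp add: ac_pmul_r)
  then show ?thesis using True assms by (simp add: crot_def pmul_id3)
next
  case False then show ?thesis by (simp add: crot_def)
qed

lemma finite_pauli_UNIV: "finite (UNIV :: pauli set)"
proof -
  have e: "(UNIV :: pauli set) = {PI, PX, PY, PZ}" by (auto intro: pauli.exhaust)
  have "finite {PI, PX, PY, PZ}" by (metis finite.emptyI finite_insert)
  then show ?thesis by (subst e)
qed

lemma finite_len: "finite {p :: pauli list. length p = n}"
  using finite_lists_length_eq[OF finite_pauli_UNIV, of n] by simp


theorem lemmaC3:
  fixes n d r :: nat and K M :: "pauli list set" and b :: "nat \<Rightarrow> pauli list"
  assumes cartan: "pauli_cartan n K M"
    and b_in_M: "\<forall>i\<in>{1..d}. b i \<in> M"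
    and b_distinct: "inj_on b {1..d}"
    and b_comm: "\<forall>i\<in>{1..d}. \<forall>j\<in>{1..d}. \<not> anticommute (b i) (b j)"
    and b_conn: "\<forall>i\<in>{1..d}. \<forall>j\<in>{1..d}. same_component (K \<union> M) (b i) (b j)"
    and r: "2 \<le> r" "r \<le> d"
    and ne1: "kset K b {r - 1} {1..r - 2} \<noteq> {}"
    and ne2: "kset K b {r} {1..r - 1} \<noteq> {}"
  shows "card (kset K b {r - 1} {1..r - 2}) > card (kset K b {r} {1..r - 1})"
proof -
  define G where "G = K \<union> M"
  have len: "\<And>p. p \<in> G \<Longrightarrow> length p = n"
    using cartan unfolding pauli_cartan_def pauli_string_def G_def by blast
  have KK: "\<And>p q. p \<in> K \<Longrightarrow> q \<in> K \<Longrightarrow> anticommute p q \<Longrightarrow> pmul p q \<in> K"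
    and MM: "\<And>p q. p \<in> M \<Longrightarrow> q \<in> M \<Longrightarrow> anticommute p q \<Longrightarrow> pmul p q \<in> K"
    and KM: "\<And>p q. p \<in> K \<Longrightarrow> q \<in> M \<Longrightarrow> anticommute p q \<Longrightarrow> pmul p q \<in> M"
    using cartan unfolding pauli_cartan_def by blast+
  have clos: "\<And>p q. p \<in> G \<Longrightarrow> q \<in> G \<Longrightarrow> anticommute p q \<Longrightarrow> pmul p q \<in> G"
  proof -
    fix p q assume "p \<in> G" "q \<in> G" "anticommute p q"
    moreover have "anticommute q p" using calculation len ac_sym by metis
    ultimately show "pmul p q \<in> G" unfolding G_def
    proof (elim UnE)
      assume "p \<in> M" "q \<in> K" "anticommute q p"
      then have "pmul q p \<in> M" using KM by blast
      then show "pmul p q \<in> K \<union> M" by (simp add: pmul_comm)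
    qed (use KK MM KM in blast)+
  qed
  define u where "u = b (r - 1)"
  define v where "v = b r"
  have rd: "r - 1 \<in> {1..d}" "r \<in> {1..d}" using r by auto
  have uM: "u \<in> M" and vM: "v \<in> M" using b_in_M rd u_def v_def by auto
  have uG: "u \<in> G" and vG: "v \<in> G" using uM vM G_def by auto
  have lu: "length u = n" and lv: "length v = n" using len uG vG by auto
  have uv: "u \<noteq> v"
  proof
    assume "u = v"
    then have "r - 1 = r" using inj_onD[OF b_distinct _ rd] u_def v_def by blast
    then show False using r by simp
  qed
  have nuv: "\<not> anticommute u v" "\<not> anticommute v u" unfolding u_def v_def using b_comm rd by blast+
  have bi: "\<And>i. i \<in> {1..r-2} \<Longrightarrow> b i \<in> M \<and> b i \<in> G \<and> length (b i) = n \<and>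
     \<not> anticommute (b i) u \<and> \<not> anticommute u (b i) \<and> \<not> anticommute (b i) v \<and> \<not> anticommute v (b i)"
  proof -
    fix i assume "i \<in> {1..r-2}"
    then have i: "i \<in> {1..d}" using r by auto
    have biM: "b i \<in> M" using b_in_M i by blast
    have "b i \<in> G" using biM G_def by blast
    moreover have "length (b i) = n" using len calculation by blast
    moreover have "\<not> anticommute (b i) u \<and> \<not> anticommute u (b i) \<and> \<not> anticommute (b i) v \<and> \<not> anticommute v (b i)"
      unfolding u_def v_def using b_comm rd i by blast
    ultimately show "b i \<in> M \<and> b i \<in> G \<and> length (b i) = n \<and>
     \<not> anticommute (b i) u \<and> \<not> anticommute u (b i) \<and> \<not> anticommute (b i) v \<and> \<not> anticommute v (b i)"
      using biM by blast
  qed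
  have "(frust_edge G)\<^sup>*\<^sup>* u v" using b_conn rd unfolding same_component_def G_def u_def v_def by blast
  from dist2[OF clos len this uG] uv nuv obtain y where yG: "y \<in> G" and uy: "anticommute u y"
    and yv: "anticommute y v" by auto
  have ly: "length y = n" using len yG by auto
  have yu: "anticommute y u" using uy ac_sym ly lu by metis
  from ne1 obtain a where aK: "a \<in> K" and au: "anticommute a u"
    and ab: "\<forall>i\<in>{1..r-2}. \<not> anticommute a (b i)"
    unfolding kset_def u_def by auto
  from ne2 obtain k where kK: "k \<in> K" and kv: "anticommute k v"
    and kb: "\<forall>i\<in>{1..r-1}. \<not> anticommute k (b i)"
    unfolding kset_def v_def by auto
  have aG: "a \<in> G" and kG: "k \<in> G" using aK kK G_def by auto
  have la: "length a = n" and lk: "length k = n" using len aG kG by auto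
  have ku: "\<not> anticommute k u" using kb r u_def by auto
  have kb2: "\<forall>i\<in>{1..r-2}. \<not> anticommute k (b i)" using kb by auto
  have x0: "\<exists>x\<in>G. anticommute x u \<and> anticommute x v \<and> (\<forall>i\<in>{1..r-2}. \<not> anticommute x (b i))"
  proof (cases "anticommute a v")
    case True then show ?thesis using aG au ab by blast
  next
    case av: False
    show ?thesis
    proof (cases "anticommute a k")
      case True
      have "pmul a k \<in> G" using clos aG kG True by blast
      moreover have "anticommute (pmul a k) u" "anticommute (pmul a k) v"
        using au av ku kv la lk lu lv by (simp_all add: ac_pmul)
      moreover have "\<forall>i\<in>{1..r-2}. \<not> anticommute (pmul a k) (b i)"
        using ab kb2 la lk bi by (simp add: ac_pmul)
      ultimately show ?thesis by blast
    next
      case ak: False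
      show ?thesis
      proof (cases "\<forall>i\<in>{1..r-2}. \<not> anticommute y (b i)")
        case True then show ?thesis using yG yu yv by blast
      next
        case False
        then obtain j where j: "j \<in> {1..r-2}" and yc: "anticommute y (b j)" by auto
        have cj: "b j \<in> G" "length (b j) = n" "\<not> anticommute u (b j)" "\<not> anticommute v (b j)"
          using bi[OF j] by auto
        have "\<exists>x\<in>G. anticommute x u \<and> anticommute x v \<and>
          (\<forall>w. length w = n \<longrightarrow> \<not> anticommute a w \<longrightarrow> \<not> anticommute k w \<longrightarrow> \<not> anticommute u w
           \<longrightarrow> \<not> anticommute v w \<longrightarrow> \<not> anticommute (b j) w \<longrightarrow> \<not> anticommute x w)"
          apply (rule construct[OF clos len yG aG kG uG vG cj(1) yc yu yv au av ak])
          using ab kb2 j kv ku nuv cj by auto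
        then obtain x where xG: "x \<in> G" and xu: "anticommute x u" and xv: "anticommute x v"
          and xw: "\<forall>w. length w = n \<longrightarrow> \<not> anticommute a w \<longrightarrow> \<not> anticommute k w \<longrightarrow> \<not> anticommute u w
           \<longrightarrow> \<not> anticommute v w \<longrightarrow> \<not> anticommute (b j) w \<longrightarrow> \<not> anticommute x w" by blast
        have "\<forall>i\<in>{1..r-2}. \<not> anticommute x (b i)"
        proof
          fix i assume i: "i \<in> {1..r-2}"
          have "\<not> anticommute (b j) (b i)" using b_comm i j r by auto
          then show "\<not> anticommute x (b i)" using xw bi[OF i] ab kb2 i by blast
        qed
        then show ?thesis using xG xu xv by blast
      qed
    qed
  qed
  have "\<exists>x\<in>K. anticommute x u \<and> anticommute x v \<and> (\<forall>i\<in>{1..r-2}. \<not> anticommute x (b i))"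
  proof -
    from x0 obtain x where xG: "x \<in> G" and xu: "anticommute x u" and xv: "anticommute x v"
      and xb: "\<forall>i\<in>{1..r-2}. \<not> anticommute x (b i)" by blast
    have lx: "length x = n" using len xG by auto
    show ?thesis
    proof (cases "x \<in> K")
      case True then show ?thesis using xu xv xb by blast
    next
      case False
      then have "x \<in> M" using xG G_def by auto
      then have "pmul x u \<in> K" using MM uM xu by blast
      moreover have "anticommute (pmul x u) u" "anticommute (pmul x u) v"
        using xu xv nuv lx lu lv by (simp_all add: ac_pmul)
      moreover have "\<forall>i\<in>{1..r-2}. \<not> anticommute (pmul x u) (b i)"
        using xb bi lx lu by (simp add: ac_pmul)
      ultimately show ?thesis by blast
    qed
  qed
  then obtain x where xK: "x \<in> K" and xu: "anticommute x u" and xv: "anticommute x v"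
    and xb: "\<forall>i\<in>{1..r-2}. \<not> anticommute x (b i)" by blast
  have lx: "length x = n" using len xK G_def by auto
  define w where "w = pmul (pmul x v) u"
  have lw: "length w = n" using lx lu lv w_def by simp
  have xvM: "pmul x v \<in> M" using KM xK vM xv by blast
  have "anticommute (pmul x v) u" using xu nuv lx lu lv by (simp add: ac_pmul)
  then have wK: "w \<in> K" using MM xvM uM w_def by blast
  define phi where "phi p = crot w (crot x p)" for p
  have vu: "anticommute v x" "anticommute u x" using xu xv lx lu lv ac_sym by metis+
  have phiv: "phi v = u"
  proof -
    have "crot x v = pmul x v" using xv by (simp add: crot_def)
    moreover have "anticommute w (pmul x v)"
      unfolding w_def using xv xu vu nuv lx lu lv by (simp add: ac_pmul ac_pmul_r)
    ultimately show ?thesis unfolding phi_def crot_def using pmul_id1[of x u v] lx lu lv w_def by simp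
  qed
  have phiu: "phi u = v"
  proof -
    have "crot x u = pmul x u" using xu by (simp add: crot_def)
    moreover have "anticommute w (pmul x u)"
      unfolding w_def using xv xu vu nuv lx lu lv by (simp add: ac_pmul ac_pmul_r)
    ultimately show ?thesis unfolding phi_def crot_def using pmul_id2[of x u v] lx lu lv w_def by simp
  qed
  have phib: "phi (b i) = b i" if i: "i \<in> {1..r-2}" for i
  proof -
    have "\<not> anticommute x (b i)" using xb i by auto
    moreover have "\<not> anticommute w (b i)"
      unfolding w_def using xb i bi[OF i] lx lu lv by (simp add: ac_pmul)
    ultimately show ?thesis unfolding phi_def crot_def by simp
  qed
  have phiac: "anticommute (phi p) (phi q) = anticommute p q" if "length p = n" "length q = n" for p q
  proof -
    have "length (crot x p) = n" "length (crot x q) = n" using crot_len that lx by auto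
    then have "anticommute (phi p) (phi q) = anticommute (crot x p) (crot x q)"
      unfolding phi_def using crot_ac[OF lw] by blast
    also have "\<dots> = anticommute p q" using crot_ac[OF lx that] .
    finally show ?thesis .
  qed
  have phiK: "phi p \<in> K" if "p \<in> K" for p
  proof -
    have "crot x p \<in> K" using that xK KK by (simp add: crot_def)
    then show ?thesis unfolding phi_def using wK KK by (simp add: crot_def)
  qed
  have phiinv: "crot x (crot w (phi p)) = p" if "length p = n" for p
  proof -
    have "length (crot x p) = n" using crot_len that lx by auto
    then have "crot w (phi p) = crot x p" unfolding phi_def using crot_inv lw by simp
    then show ?thesis using crot_inv[of x p] that lx by simp
  qed
  define A where "A = kset K b {r - 1} {1..r - 2}"
  define B where "B = kset K b {r} {1..r - 1}"
  have lenK: "\<And>p. p \<in> K \<Longrightarrow> length p = n" using len G_def by auto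
  have finA: "finite A"
    by (rule finite_subset[OF _ finite_len[of n]]) (auto simp: A_def kset_def lenK)
  have inj: "inj_on phi B"
  proof (rule inj_onI)
    fix p q assume "p \<in> B" "q \<in> B" "phi p = phi q"
    moreover have "p \<in> K" "q \<in> K" using calculation unfolding B_def kset_def by auto
    ultimately show "p = q" using phiinv[of p] phiinv[of q] lenK by metis
  qed
  have sub: "phi ` B \<subseteq> A - {x}"
  proof
    fix z assume "z \<in> phi ` B"
    then obtain p where pB: "p \<in> B" and z: "z = phi p" by auto
    have pK: "p \<in> K" and pv: "anticommute p v" and pb: "\<forall>i\<in>{1..r-1}. \<not> anticommute p (b i)"
      using pB unfolding B_def kset_def v_def by auto
    have lp: "length p = n" using lenK pK by auto
    have pu: "\<not> anticommute p u" using pb r u_def by auto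
    have "z \<in> K" using phiK pK z by auto
    moreover have "anticommute z u" using phiac[OF lp lv] phiv pv z by simp
    moreover have "\<not> anticommute z v" using phiac[OF lp lu] phiu pu z by simp
    moreover have "\<forall>i\<in>{1..r-2}. \<not> anticommute z (b i)"
    proof
      fix i assume i: "i \<in> {1..r-2}"
      have "\<not> anticommute p (b i)" using pb i by auto
      then show "\<not> anticommute z (b i)" using phiac[OF lp, of "b i"] bi[OF i] phib[OF i] z by simp
    qed
    ultimately show "z \<in> A - {x}" using xv unfolding A_def kset_def u_def v_def by auto
  qed
  have xA: "x \<in> A" using xK xu xb unfolding A_def kset_def u_def by auto
  have "card B = card (phi ` B)" using card_image[OF inj] by simp
  also have "\<dots> \<le> card (A - {x})" using card_mono[OF _ sub] finA by auto
  also have "\<dots> < card A" using card_Diff1_less[OF finA xA] .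
  finally show ?thesis unfolding A_def B_def .
qed

end
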